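(* Let $M>0$, $0<\delta\le+\infty$, and $\zeta:(0,\delta)\to(0,\infty)$ with $\lim_{\lambda\to0}\zeta(\lambda)/\lambda=0$. Let $(u_n)_{n\ge0}$ be nonnegative numbers with $u_0\le M$ and $$u_{n+1}\le(1-\lambda)u_n+M\zeta(\lambda)\qquad\text{for all }n\ge0\text{ and all }\lambda\in(0,\delta).$$ Define $\zeta^*(u):=\sup_{\lambda\in(0,\delta)}(\lambda u-\zeta(\lambda))\in(-\infty,+\infty]$, $F(u):=\int_u^1\frac{dv}{\zeta^*(v)}$ for $u\in(0,1]$ (with $1/\zeta^*(v):=0$ when $\zeta^*(v)=+\infty$), and $F^{-1}(t):=\inf\{u\in(0,1]:F(u)\le t\}$. Then $u_n\le M\,F^{-1}(n)$ for all integers $n\ge0$. *)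

theory Defs
  imports "HOL-Analysis.Analysis"
begin

definition lam_dom :: "ereal \<Rightarrow> real set" where
  "lam_dom \<delta> = {l::real. 0 < l \<and> ereal l < \<delta>}"

definition zeta_star :: "ereal \<Rightarrow> (real \<Rightarrow> real) \<Rightarrow> real \<Rightarrow> ereal" where
  "zeta_star \<delta> \<zeta> u = (SUP l\<in>lam_dom \<delta>. ereal (l * u - \<zeta> l))"

definition inv_zeta_star :: "ereal \<Rightarrow> (real \<Rightarrow> real) \<Rightarrow> real \<Rightarrow> real" where
  "inv_zeta_star \<delta> \<zeta> v =
     (if zeta_star \<delta> \<zeta> v = \<infinity> then 0 else 1 / real_of_ereal (zeta_star \<delta> \<zeta> v))"

definition F_fun :: "ereal \<Rightarrow> (real \<Rightarrow> real) \<Rightarrow> real \<Rightarrow> real" where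
  "F_fun \<delta> \<zeta> u = integral {u..1} (inv_zeta_star \<delta> \<zeta>)"

definition F_inv :: "ereal \<Rightarrow> (real \<Rightarrow> real) \<Rightarrow> real \<Rightarrow> real" where
  "F_inv \<delta> \<zeta> t = Inf {u. 0 < u \<and> u \<le> 1 \<and> F_fun \<delta> \<zeta> u \<le> t}"

end

theory Submission
  imports Defs
begin

lemma zs_mono:
  assumes "v \<le> w"
  shows "zeta_star \<delta> \<zeta> v \<le> zeta_star \<delta> \<zeta> w"
  unfolding zeta_star_def lam_dom_def
  by (rule SUP_mono) (use assms in \<open>auto intro!: mult_left_mono\<close>)

lemma small_witness:
  assumes "0 < \<delta>" and lim: "((\<lambda>l. \<zeta> l / l) \<longlongrightarrow> 0) (at_right 0)"
    and "w > 0" "b > (0::real)"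
  shows "\<exists>l\<in>lam_dom \<delta>. l < b \<and> \<zeta> l < l * w"
proof -
  have "\<forall>\<^sub>F l in at_right 0. \<zeta> l / l < w"
    using order_tendstoD(2)[OF lim \<open>w > 0\<close>] .
  then obtain c where c: "c > 0" "\<And>y. y > 0 \<Longrightarrow> y < c \<Longrightarrow> \<zeta> y / y < w"
    unfolding eventually_at_right_field by auto
  obtain r :: real where r: "0 < r" "ereal r < \<delta>"
  proof (cases \<delta>)
    case (real x)
    then show ?thesis using that[of "x/2"] assms(1) by auto
  next
    case PInf
    then show ?thesis using that[of 1] by auto
  next
    case MInf
    then show ?thesis using assms(1) by auto
  qed
  define l where "l = min (min (b/2) (c/2)) r"
  have l: "0 < l" "l < b" "l < c" "l \<le> r"
    using r c \<open>b>0\<close> unfolding l_def by auto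
  have "ereal l < \<delta>" using l(4) r(2) by (meson ereal_less_eq(3) order_le_less_trans)
  then have "l \<in> lam_dom \<delta>" using l unfolding lam_dom_def by auto
  moreover have "\<zeta> l < l * w" using c(2)[OF l(1) l(3)] l(1) by (simp add: divide_less_eq mult.commute)
  ultimately show ?thesis using l by auto
qed

lemma zs_pos:
  assumes "0 < \<delta>" and lim: "((\<lambda>l. \<zeta> l / l) \<longlongrightarrow> 0) (at_right 0)" and "v > 0"
  shows "zeta_star \<delta> \<zeta> v > 0"
proof -
  obtain l where l: "l \<in> lam_dom \<delta>" "\<zeta> l < l * v"
    using small_witness[OF assms(1,2) \<open>v>0\<close>, of 1] by auto
  have "ereal 0 < ereal (l * v - \<zeta> l)" using l(2) by simp
  also have "\<dots> \<le> zeta_star \<delta> \<zeta> v" unfolding zeta_star_def using l(1) by (rule SUP_upper2) simp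
  finally show ?thesis by (simp add: zero_ereal_def)
qed

lemma inv_nonneg:
  assumes "0 < \<delta>" and lim: "((\<lambda>l. \<zeta> l / l) \<longlongrightarrow> 0) (at_right 0)" and "v > 0"
  shows "inv_zeta_star \<delta> \<zeta> v \<ge> 0"
proof -
  have "zeta_star \<delta> \<zeta> v > 0" using zs_pos[OF assms] .
  then show ?thesis unfolding inv_zeta_star_def
    by (cases "zeta_star \<delta> \<zeta> v") auto
qed

lemma inv_pos:
  assumes "0 < \<delta>" and lim: "((\<lambda>l. \<zeta> l / l) \<longlongrightarrow> 0) (at_right 0)" and "v > 0"
    and "zeta_star \<delta> \<zeta> v = ereal z"
  shows "inv_zeta_star \<delta> \<zeta> v = 1 / z" "z > 0"
proof -
  have "zeta_star \<delta> \<zeta> v > 0" using zs_pos[OF assms(1-3)] .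
  then show "z > 0" using assms(4) by simp
  show "inv_zeta_star \<delta> \<zeta> v = 1 / z" unfolding inv_zeta_star_def using assms(4) by simp
qed

lemma inv_antimono:
  assumes "0 < \<delta>" and lim: "((\<lambda>l. \<zeta> l / l) \<longlongrightarrow> 0) (at_right 0)" and "0 < v" "v \<le> w"
  shows "inv_zeta_star \<delta> \<zeta> w \<le> inv_zeta_star \<delta> \<zeta> v"
proof -
  have pv: "zeta_star \<delta> \<zeta> v > 0" using zs_pos[OF assms(1,2,3)] .
  have pw: "zeta_star \<delta> \<zeta> w > 0" using zs_pos[OF assms(1,2)] assms(3,4) by auto
  have m: "zeta_star \<delta> \<zeta> v \<le> zeta_star \<delta> \<zeta> w" using zs_mono assms(4) .
  show ?thesis
  proof (cases "zeta_star \<delta> \<zeta> w")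
    case (real y)
    then obtain x where x: "zeta_star \<delta> \<zeta> v = ereal x"
      using m pv by (cases "zeta_star \<delta> \<zeta> v") auto
    have "0 < x" "x \<le> y" using x real pv m by auto
    then show ?thesis unfolding inv_zeta_star_def using x real
      by (simp add: frac_le)
  next
    case PInf
    then show ?thesis using inv_nonneg[OF assms(1,2,3)] unfolding inv_zeta_star_def by simp
  next
    case MInf
    then show ?thesis using pw by simp
  qed
qed

lemma inv_integrable:
  assumes "0 < \<delta>" and lim: "((\<lambda>l. \<zeta> l / l) \<longlongrightarrow> 0) (at_right 0)" and "0 < a"
  shows "inv_zeta_star \<delta> \<zeta> integrable_on {a..b}"
proof -
  have "mono_on {a..b} (\<lambda>x. - inv_zeta_star \<delta> \<zeta> x)"
    unfolding mono_on_def using inv_antimono[OF assms(1,2)] assms(3) by force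
  then have "(\<lambda>x. - inv_zeta_star \<delta> \<zeta> x) integrable_on {a..b}"
    by (rule integrable_on_mono_on)
  then show ?thesis using integrable_neg by fastforce
qed

lemma F_step:
  assumes "0 < \<delta>" and lim: "((\<lambda>l. \<zeta> l / l) \<longlongrightarrow> 0) (at_right 0)" and "0 < a" "a \<le> b" "b \<le> 1"
  shows "F_fun \<delta> \<zeta> a \<ge> F_fun \<delta> \<zeta> b + (b - a) * inv_zeta_star \<delta> \<zeta> b"
proof -
  have I: "inv_zeta_star \<delta> \<zeta> integrable_on {a..1}" using inv_integrable[OF assms(1-3)] .
  have c: "integral {a..b} (inv_zeta_star \<delta> \<zeta>) + integral {b..1} (inv_zeta_star \<delta> \<zeta>) = integral {a..1} (inv_zeta_star \<delta> \<zeta>)"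
    by (rule Henstock_Kurzweil_Integration.integral_combine) (use assms I in auto)
  have "integral {a..b} (\<lambda>x. inv_zeta_star \<delta> \<zeta> b) \<le> integral {a..b} (inv_zeta_star \<delta> \<zeta>)"
    by (rule integral_le) (use inv_integrable[OF assms(1-3)] inv_antimono[OF assms(1,2)] assms(3) in auto)
  then have "(b - a) * inv_zeta_star \<delta> \<zeta> b \<le> integral {a..b} (inv_zeta_star \<delta> \<zeta>)"
    using assms(4) by (simp add: mult.commute)
  then show ?thesis using c unfolding F_fun_def by linarith
qed

theorem lemma4p11:
  fixes M :: real and \<delta> :: ereal and \<zeta> :: "real \<Rightarrow> real" and u :: "nat \<Rightarrow> real"
  assumes "M > 0"
    and "0 < \<delta>"
    and "\<And>l. l \<in> lam_dom \<delta> \<Longrightarrow> \<zeta> l > 0"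
    and "((\<lambda>l. \<zeta> l / l) \<longlongrightarrow> 0) (at_right 0)"
    and "\<And>n. u n \<ge> 0"
    and "u 0 \<le> M"
    and "\<And>n l. l \<in> lam_dom \<delta> \<Longrightarrow> u (Suc n) \<le> (1 - l) * u n + M * \<zeta> l"
  shows "\<forall>n. u n \<le> M * F_inv \<delta> \<zeta> (real n)"
proof -
  define v where "v n = u n / M" for n
  have v0: "v n \<ge> 0" for n using assms(1,5) unfolding v_def by simp
  have v1: "v 0 \<le> 1" using assms(1,6) unfolding v_def by simp
  have rec: "l * v n - \<zeta> l \<le> v n - v (Suc n)" if "l \<in> lam_dom \<delta>" for n l
  proof -
    have "u (Suc n) \<le> (1 - l) * u n + M * \<zeta> l" using assms(7)[OF that] .
    then have "l * u n - M * \<zeta> l \<le> u n - u (Suc n)" by (simp add: algebra_simps)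
    then have "(l * u n - M * \<zeta> l) / M \<le> (u n - u (Suc n)) / M" using assms(1) by (simp add: divide_right_mono)
    then show ?thesis using assms(1) unfolding v_def by (simp add: diff_divide_distrib)
  qed
  have zsle: "zeta_star \<delta> \<zeta> (v n) \<le> ereal (v n - v (Suc n))" for n
    unfolding zeta_star_def by (rule SUP_least) (use rec in auto)
  have step: "v (Suc n) < v n \<and> (\<exists>z. zeta_star \<delta> \<zeta> (v n) = ereal z \<and> z > 0 \<and> z \<le> v n - v (Suc n))"
    if "v n > 0" for n
  proof -
    have p: "zeta_star \<delta> \<zeta> (v n) > 0" using zs_pos[OF assms(2,4) that] .
    then obtain z where z: "zeta_star \<delta> \<zeta> (v n) = ereal z"
      using zsle[of n] by (cases "zeta_star \<delta> \<zeta> (v n)") auto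
    have "z > 0" "z \<le> v n - v (Suc n)" using p zsle[of n] z by auto
    then show ?thesis using z by auto
  qed
  have zero: "v (Suc n) = 0" if "v n = 0" for n
  proof (rule ccontr)
    assume "v (Suc n) \<noteq> 0"
    then have pos: "v (Suc n) > 0" using v0[of "Suc n"] by auto
    obtain l where l: "l \<in> lam_dom \<delta>" "l < v (Suc n)" "\<zeta> l < l * 1"
      using small_witness[OF assms(2,4) _ pos, of 1] by auto
    show False using rec[OF l(1), of n] that l by simp
  qed
  have dec: "v (Suc n) \<le> v n" for n
    using step[of n] zero[of n] v0[of n] by force
  have le1: "v n \<le> 1" for n
    by (induction n) (use v1 dec order_trans in blast)+
  have Fge: "v n > 0 \<Longrightarrow> F_fun \<delta> \<zeta> (v n) \<ge> real n" for n
  proof (induction n)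
    case 0
    show ?case unfolding F_fun_def
      by simp (rule integral_nonneg, use inv_integrable[OF assms(2,4) 0] inv_nonneg[OF assms(2,4)] 0 in auto)
  next
    case (Suc n)
    have vn: "v n > 0" using Suc.prems dec[of n] by linarith
    obtain z where z: "zeta_star \<delta> \<zeta> (v n) = ereal z" "z > 0" "z \<le> v n - v (Suc n)"
      using step[OF vn] by auto
    have iv: "inv_zeta_star \<delta> \<zeta> (v n) = 1 / z" using inv_pos[OF assms(2,4) vn z(1)] by simp
    have "F_fun \<delta> \<zeta> (v (Suc n)) \<ge> F_fun \<delta> \<zeta> (v n) + (v n - v (Suc n)) * (1 / z)"
      using F_step[OF assms(2,4) Suc.prems dec le1] iv by simp
    moreover have "(v n - v (Suc n)) * (1 / z) \<ge> 1" using z by (simp add: field_simps)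
    ultimately show ?case using Suc.IH[OF vn] by simp
  qed
  show ?thesis
  proof
    fix n
    define S where "S = {u. 0 < u \<and> u \<le> 1 \<and> F_fun \<delta> \<zeta> u \<le> real n}"
    have "1 \<in> S" unfolding S_def F_fun_def by simp
    have "v n \<le> Inf S"
    proof (rule cInf_greatest)
      show "S \<noteq> {}" using \<open>1 \<in> S\<close> by auto
      fix x assume x: "x \<in> S"
      show "v n \<le> x"
      proof (rule ccontr)
        assume "\<not> v n \<le> x"
        then have lt: "x < v n" by simp
        have x0: "0 < x" "x \<le> 1" "F_fun \<delta> \<zeta> x \<le> real n" using x unfolding S_def by auto
        have vn: "v n > 0" using lt x0 by linarith
        obtain z where z: "zeta_star \<delta> \<zeta> (v n) = ereal z" "z > 0"
          using step[OF vn] by auto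
        have iv: "inv_zeta_star \<delta> \<zeta> (v n) = 1 / z" using inv_pos[OF assms(2,4) vn z(1)] by simp
        have "F_fun \<delta> \<zeta> x \<ge> F_fun \<delta> \<zeta> (v n) + (v n - x) * (1 / z)"
          using F_step[OF assms(2,4) x0(1) _ le1, of n] lt iv by simp
        moreover have "(v n - x) * (1 / z) > 0" using lt z by simp
        ultimately show False using Fge[OF vn] x0(3) by linarith
      qed
    qed
    then have "M * v n \<le> M * Inf S" using assms(1) by simp
    then show "u n \<le> M * F_inv \<delta> \<zeta> (real n)"
      unfolding F_inv_def S_def[symmetric] v_def using assms(1) by simp
  qed
qed

end
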